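(* Let $G_{12}$ be the graph with vertex set $\{1,\dots,12\}$ in which two distinct vertices are adjacent if and only if they both belong to one of the sets $\{1,4,7\}$, $\{2,4,5,6\}$, $\{2,4,6,7\}$, $\{2,4,6,9\}$, $\{2,4,9,12\}$, $\{2,5,8\}$, $\{2,6,7,11\}$, $\{2,11,12\}$, $\{3,6,9\}$, $\{4,5,6,10\}$, $\{4,10,12\}$, $\{6,10,11\}$, $\{10,11,12\}$. Then $G_{12}$ is not $\cup$-triangle, i.e., neither $G_{12}$ nor its complement is a triangle graph.
   Context: A graph $G$ is triangle if for every maximal stable set $S$ of $G$ and every edge $uv$ of $G$ with $u,v\notin S$, there is $s\in S$ adjacent to both $u$ and $v$. A graph is $\cup$-triangle if it or its complement is triangle. *)

theory Defs
  imports Main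
begin

text \<open>A (finite simple) graph is given by a vertex set V and an adjacency predicate E,
  which we only consult on pairs of vertices in V.\<close>

definition stable_set :: "'a set \<Rightarrow> ('a \<Rightarrow> 'a \<Rightarrow> bool) \<Rightarrow> 'a set \<Rightarrow> bool" where
  "stable_set V E S \<longleftrightarrow> S \<subseteq> V \<and> (\<forall>x\<in>S. \<forall>y\<in>S. \<not> E x y)"

definition maximal_stable_set :: "'a set \<Rightarrow> ('a \<Rightarrow> 'a \<Rightarrow> bool) \<Rightarrow> 'a set \<Rightarrow> bool" where
  "maximal_stable_set V E S \<longleftrightarrow> stable_set V E S \<and>
     (\<forall>T. stable_set V E T \<and> S \<subseteq> T \<longrightarrow> T = S)"

definition triangle_graph :: "'a set \<Rightarrow> ('a \<Rightarrow> 'a \<Rightarrow> bool) \<Rightarrow> bool" where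
  "triangle_graph V E \<longleftrightarrow>
     (\<forall>S. maximal_stable_set V E S \<longrightarrow>
        (\<forall>u\<in>V. \<forall>v\<in>V. E u v \<and> u \<notin> S \<and> v \<notin> S \<longrightarrow> (\<exists>s\<in>S. E s u \<and> E s v)))"

definition compl_graph :: "('a \<Rightarrow> 'a \<Rightarrow> bool) \<Rightarrow> 'a \<Rightarrow> 'a \<Rightarrow> bool" where
  "compl_graph E x y \<longleftrightarrow> x \<noteq> y \<and> \<not> E x y"

definition union_triangle :: "'a set \<Rightarrow> ('a \<Rightarrow> 'a \<Rightarrow> bool) \<Rightarrow> bool" where
  "union_triangle V E \<longleftrightarrow> triangle_graph V E \<or> triangle_graph V (compl_graph E)"

definition G12_cliques :: "nat set list" where
  "G12_cliques = [{1,4,7}, {2,4,5,6}, {2,4,6,7}, {2,4,6,9}, {2,4,9,12}, {2,5,8},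
     {2,6,7,11}, {2,11,12}, {3,6,9}, {4,5,6,10}, {4,10,12}, {6,10,11}, {10,11,12}]"

definition G12_V :: "nat set" where
  "G12_V = {1..12}"

definition G12_E :: "nat \<Rightarrow> nat \<Rightarrow> bool" where
  "G12_E x y \<longleftrightarrow> x \<noteq> y \<and> (\<exists>C\<in>set G12_cliques. x \<in> C \<and> y \<in> C)"

end

theory Submission
  imports Defs
begin

lemma Vl: "G12_V = set [1,2,3,4,5,6,7,8,9,10,11,12]"
  by (simp add: G12_V_def atLeastAtMost_upt upt_rec numeral_eq_Suc)

lemma max1: "maximal_stable_set G12_V G12_E {5,7,9}"
proof -
  have st: "stable_set G12_V G12_E {5,7,9}"
    by (simp add: stable_set_def G12_V_def G12_E_def G12_cliques_def)
  have dom: "\<forall>v\<in>G12_V. v \<notin> {5,7,9} \<longrightarrow> (\<exists>s\<in>{5,7,9}. G12_E s v)"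
    unfolding Vl by (simp add: G12_E_def G12_cliques_def)
  show ?thesis unfolding maximal_stable_set_def
  proof (intro conjI st allI impI)
    fix T assume T: "stable_set G12_V G12_E T \<and> {5,7,9} \<subseteq> T"
    show "T = {5,7,9}"
    proof (rule ccontr)
      assume "T \<noteq> {5,7,9}"
      then obtain v where v: "v \<in> T" "v \<notin> {5,7,9}" using T by blast
      then have "v \<in> G12_V" using T by (auto simp: stable_set_def)
      then obtain s where "s \<in> {5,7,9}" "G12_E s v" using dom v by blast
      then show False using T v by (auto simp: stable_set_def)
    qed
  qed
qed

lemma max2: "maximal_stable_set G12_V (compl_graph G12_E) {2,11,12}"
proof -
  have st: "stable_set G12_V (compl_graph G12_E) {2,11,12}"
    by (simp add: stable_set_def compl_graph_def G12_V_def G12_E_def G12_cliques_def)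
  have dom: "\<forall>v\<in>G12_V. v \<notin> {2,11,12} \<longrightarrow> (\<exists>s\<in>{2,11,12}. compl_graph G12_E s v)"
    unfolding Vl by (simp add: compl_graph_def G12_E_def G12_cliques_def)
  show ?thesis unfolding maximal_stable_set_def
  proof (intro conjI st allI impI)
    fix T assume T: "stable_set G12_V (compl_graph G12_E) T \<and> {2,11,12} \<subseteq> T"
    show "T = {2,11,12}"
    proof (rule ccontr)
      assume "T \<noteq> {2,11,12}"
      then obtain v where v: "v \<in> T" "v \<notin> {2,11,12}" using T by blast
      then have "v \<in> G12_V" using T by (auto simp: stable_set_def)
      then obtain s where "s \<in> {2,11,12}" "compl_graph G12_E s v" using dom v by blast
      then show False using T v by (auto simp: stable_set_def)
    qed
  qed
qed

theorem proposition42: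
  shows "\<not> union_triangle G12_V G12_E"
proof -
  have a: "\<not> triangle_graph G12_V G12_E"
  proof
    assume "triangle_graph G12_V G12_E"
    then have "\<exists>s\<in>{5,7,9}. G12_E s 10 \<and> G12_E s 11"
      using max1 unfolding triangle_graph_def
      by (erule_tac x="{5,7,9}" in allE)
         (simp add: Vl G12_E_def G12_cliques_def)
    then show False by (simp add: G12_E_def G12_cliques_def)
  qed
  have b: "\<not> triangle_graph G12_V (compl_graph G12_E)"
  proof
    assume "triangle_graph G12_V (compl_graph G12_E)"
    then have "\<exists>s\<in>{2,11,12}. compl_graph G12_E s 7 \<and> compl_graph G12_E s 9"
      using max2 unfolding triangle_graph_def
      by (erule_tac x="{2,11,12}" in allE)
         (simp add: Vl compl_graph_def G12_E_def G12_cliques_def)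
    then show False by (simp add: compl_graph_def G12_E_def G12_cliques_def)
  qed
  show ?thesis using a b by (simp add: union_triangle_def)
qed

end
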